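(* In the single-item all-pay auction with budgets described in the context, in a Nash equilibrium $(F_1,F_2)$, if $\underline{x}_1<\overline{x}_1$ and $\underline{x}_2<\overline{x}_2$, then $\underline{x}_1=\underline{x}_2=0$.
   Context: Single-item all-pay auction with budgets. There are two players $i\in\{1,2\}$; $-i$ denotes the opponent of $i$. Player $i$ has budget $B_i\ge 0$ and valuation $v_i>0$ for a single item. A pure strategy of player $i$ is a bid $x_i\in[0,B_i]$; a mixed strategy is a probability distribution on $[0,B_i]$, described by its cumulative distribution function $F_i$. The player with the higher bid wins the item. Tie-breaking: if $x_1=x_2=\min\{B_1,B_2,v_1,v_2\}$ and $\min\{B_i,v_i\}>\min\{B_{-i},v_{-i}\}$ for some $i$, then player $i$ wins; in all other ties each player wins with probability $\frac12$. Player $i$'s utility is $v_i-x_i$ if he wins and $-x_i$ if he loses. A Nash equilibrium is a pair $(F_1,F_2)$ such that each $F_i$ maximizes player $i$'s expected utility against $F_{-i}$ over all mixed strategies on $[0,B_i]$. $Supp(F_i)$ is the support of $F_i$, $\overline{x}_i=\sup Supp(F_i)$ and $\underline{x}_i=\inf Supp(F_i)$. *)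

theory Defs
  imports "HOL-Probability.Probability"
begin

definition win_prob :: "real \<Rightarrow> real \<Rightarrow> real \<Rightarrow> real \<Rightarrow> real \<Rightarrow> real \<Rightarrow> real" where
  "win_prob Bm vm Bo vo x y =
     (if x > y then 1
      else if x < y then 0
      else if x = min (min Bm Bo) (min vm vo) \<and> min Bm vm > min Bo vo then 1
      else if x = min (min Bm Bo) (min vm vo) \<and> min Bo vo > min Bm vm then 0
      else 1/2)"

definition util :: "real \<Rightarrow> real \<Rightarrow> real \<Rightarrow> real \<Rightarrow> real \<Rightarrow> real \<Rightarrow> real" where
  "util Bm vm Bo vo x y = vm * win_prob Bm vm Bo vo x y - x"

definition mixed_strategies :: "real \<Rightarrow> real measure set" where
  "mixed_strategies B = {M. prob_space M \<and> sets M = sets borel \<and> emeasure M {0..B} = 1}"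

definition exp_util :: "real \<Rightarrow> real \<Rightarrow> real \<Rightarrow> real \<Rightarrow> real measure \<Rightarrow> real measure \<Rightarrow> real" where
  "exp_util Bm vm Bo vo Mm Mo =
     (\<integral>z. util Bm vm Bo vo (fst z) (snd z) \<partial>(Mm \<Otimes>\<^sub>M Mo))"

definition nash_eq :: "real \<Rightarrow> real \<Rightarrow> real \<Rightarrow> real \<Rightarrow> real measure \<Rightarrow> real measure \<Rightarrow> bool" where
  "nash_eq B1 v1 B2 v2 M1 M2 \<longleftrightarrow>
     M1 \<in> mixed_strategies B1 \<and> M2 \<in> mixed_strategies B2 \<and>
     (\<forall>M \<in> mixed_strategies B1. exp_util B1 v1 B2 v2 M M2 \<le> exp_util B1 v1 B2 v2 M1 M2) \<and>
     (\<forall>M \<in> mixed_strategies B2. exp_util B2 v2 B1 v1 M M1 \<le> exp_util B2 v2 B1 v1 M2 M1)"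

definition supp :: "real measure \<Rightarrow> real set" where
  "supp M = {x. \<forall>e>0. emeasure M (ball x e) > 0}"

definition supp_low :: "real measure \<Rightarrow> real" where
  "supp_low M = Inf (supp M)"

definition supp_up :: "real measure \<Rightarrow> real" where
  "supp_up M = Sup (supp M)"

end

theory Submission
  imports Defs
begin


lemma wp_meas: "(\<lambda>z. win_prob Bm vm Bo vo (fst z) (snd z)) \<in> borel_measurable (borel \<Otimes>\<^sub>M borel)"
  unfolding win_prob_def by measurable

lemma util_meas: "(\<lambda>z. util Bm vm Bo vo (fst z) (snd z)) \<in> borel_measurable (borel \<Otimes>\<^sub>M borel)"
  unfolding util_def using wp_meas by measurable

lemma wp_bounds: "0 \<le> win_prob Bm vm Bo vo x y" "win_prob Bm vm Bo vo x y \<le> 1"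
  unfolding win_prob_def by auto

lemma mixedD:
  assumes "M \<in> mixed_strategies B"
  shows "prob_space M" "sets M = sets borel" "space M = UNIV" "AE x in M. x \<in> {0..B}"
    "measure M {0..B} = 1"
proof -
  show P: "prob_space M" and S: "sets M = sets borel" using assms unfolding mixed_strategies_def by auto
  show SP: "space M = UNIV" using sets_eq_imp_space_eq[OF S] by simp
  have E: "emeasure M {0..B} = 1" using assms unfolding mixed_strategies_def by auto
  then show "measure M {0..B} = 1" by (simp add: measure_def)
  show "AE x in M. x \<in> {0..B}"
    using prob_space.AE_in_set_eq_1[OF P, of "{0..B}"] S \<open>measure M {0..B} = 1\<close> by simp
qed

lemma return_mixed:
  assumes "x \<in> {0..B}" shows "return borel x \<in> mixed_strategies B"
  using assms unfolding mixed_strategies_def by (auto intro!: prob_space_return)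

lemma eu_fubini:
  assumes M: "M \<in> mixed_strategies Bm" and Mo: "Mo \<in> mixed_strategies Bo"
  shows "integrable M (\<lambda>x. \<integral>y. util Bm vm Bo vo x y \<partial>Mo)"
    "exp_util Bm vm Bo vo M Mo = (\<integral>x. (\<integral>y. util Bm vm Bo vo x y \<partial>Mo) \<partial>M)"
proof -
  interpret P: prob_space M using mixedD[OF M] by simp
  interpret Q: prob_space Mo using mixedD[OF Mo] by simp
  interpret PQ: pair_prob_space M Mo ..
  have sp: "sets (M \<Otimes>\<^sub>M Mo) = sets (borel \<Otimes>\<^sub>M borel)"
    by (rule sets_pair_measure_cong) (auto simp: mixedD[OF M] mixedD[OF Mo])
  have meas: "(\<lambda>z. util Bm vm Bo vo (fst z) (snd z)) \<in> borel_measurable (M \<Otimes>\<^sub>M Mo)"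
    using util_meas measurable_cong_sets[OF sp refl] by blast
  have null: "(UNIV - {0..Bm}) \<times> UNIV \<in> null_sets (M \<Otimes>\<^sub>M Mo)"
  proof -
    have "emeasure M (UNIV - {0..Bm}) = 0"
    proof -
      have e: "{x \<in> space M. \<not> x \<in> {0..Bm}} = UNIV - {0..Bm}" using mixedD(3)[OF M] by auto
      have s: "UNIV - {0..Bm} \<in> sets M" using mixedD(2)[OF M] by auto
      show ?thesis using AE_iff_measurable[OF s e] mixedD(4)[OF M] by blast
    qed
    then have "UNIV - {0..Bm} \<in> null_sets M" using mixedD(2)[OF M] by (auto simp: null_sets_def)
    then show ?thesis
      using mixedD(2,3)[OF Mo] Q.times_in_null_sets1 by auto
  qed
  have ae: "AE z in M \<Otimes>\<^sub>M Mo. fst z \<in> {0..Bm}"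
    by (rule AE_I'[OF null]) auto
  have int: "integrable (M \<Otimes>\<^sub>M Mo) (\<lambda>z. util Bm vm Bo vo (fst z) (snd z))"
  proof (rule PQ.integrable_const_bound[where B="\<bar>vm\<bar> + Bm"])
    show "AE z in M \<Otimes>\<^sub>M Mo. norm (util Bm vm Bo vo (fst z) (snd z)) \<le> \<bar>vm\<bar> + Bm"
      using ae
    proof eventually_elim
      case (elim z)
      have "\<bar>vm * win_prob Bm vm Bo vo (fst z) (snd z)\<bar> \<le> \<bar>vm\<bar>"
        using wp_bounds[of Bm vm Bo vo "fst z" "snd z"] by (simp add: abs_mult mult_left_le)
      then show ?case using elim unfolding util_def by auto
    qed
  qed (rule meas)
  show "integrable M (\<lambda>x. \<integral>y. util Bm vm Bo vo x y \<partial>Mo)"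
    using PQ.integrable_fst'[OF int] by simp
  show "exp_util Bm vm Bo vo M Mo = (\<integral>x. (\<integral>y. util Bm vm Bo vo x y \<partial>Mo) \<partial>M)"
    unfolding exp_util_def using PQ.integral_fst'[OF int] by simp
qed

definition uu :: "real \<Rightarrow> real \<Rightarrow> real \<Rightarrow> real \<Rightarrow> real measure \<Rightarrow> real \<Rightarrow> real" where
  "uu Bm vm Bo vo Mo x = (\<integral>y. util Bm vm Bo vo x y \<partial>Mo)"

lemma uu_bounds:
  assumes Mo: "Mo \<in> mixed_strategies Bo" and vm: "vm \<ge> 0"
  shows "uu Bm vm Bo vo Mo x \<le> vm * measure Mo {..x} - x" (is ?A)
    "uu Bm vm Bo vo Mo x \<ge> vm * measure Mo {..<x} - x" (is ?B)
    "uu Bm vm Bo vo Mo x \<le> vm * (measure Mo {..<x} + win_prob Bm vm Bo vo x x * measure Mo {x}) - x"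
      (is ?C)
proof -
  interpret Q: prob_space Mo using mixedD[OF Mo] by simp
  have sp: "space Mo = UNIV" "sets Mo = sets borel" using mixedD[OF Mo] by auto
  have measy: "(\<lambda>y. util Bm vm Bo vo x y) \<in> borel_measurable Mo"
  proof -
    have "(\<lambda>y. util Bm vm Bo vo (fst (x,y)) (snd (x,y))) \<in> borel_measurable borel"
      using util_meas[of Bm vm Bo vo] by measurable
    then show ?thesis by (subst measurable_cong_sets[OF sp(2) refl]) simp
  qed
  have int: "integrable Mo (\<lambda>y. util Bm vm Bo vo x y)"
  proof (rule Q.integrable_const_bound[where B="\<bar>vm\<bar> + \<bar>x\<bar>"])
    show "AE y in Mo. norm (util Bm vm Bo vo x y) \<le> \<bar>vm\<bar> + \<bar>x\<bar>"
    proof (rule AE_I2)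
      fix y
      have "\<bar>vm * win_prob Bm vm Bo vo x y\<bar> \<le> \<bar>vm\<bar>"
        using wp_bounds[of Bm vm Bo vo x y] by (simp add: abs_mult mult_left_le)
      then show "norm (util Bm vm Bo vo x y) \<le> \<bar>vm\<bar> + \<bar>x\<bar>" unfolding util_def by auto
    qed
  qed (rule measy)
  have ii: "\<And>A B s. A \<in> sets borel \<Longrightarrow> B \<in> sets borel \<Longrightarrow>
      integrable Mo (\<lambda>y. vm * (indicator A y + s * indicator B y) - x)"
    using sp by (auto intro!: Bochner_Integration.integrable_diff integrable_mult_right Q.integrable_const
      Bochner_Integration.integrable_add simp: integrable_indicator_iff Q.emeasure_eq_measure)
  have ie: "\<And>A B s. A \<in> sets borel \<Longrightarrow> B \<in> sets borel \<Longrightarrow>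
     (\<integral>y. (vm * (indicator A y + s * indicator B y) - x) \<partial>Mo) = vm * (measure Mo A + s * measure Mo B) - x"
  proof -
    fix A B :: "real set" and s :: real assume AB: "A \<in> sets borel" "B \<in> sets borel"
    have iA: "integrable Mo (indicator A :: real \<Rightarrow> real)" "integrable Mo (\<lambda>y. s * indicator B y :: real)"
      using sp AB by (auto simp: integrable_indicator_iff Q.emeasure_eq_measure)
    have "(\<integral>y. (vm * (indicator A y + s * indicator B y) - x) \<partial>Mo) =
        (\<integral>y. vm * (indicator A y + s * indicator B y) \<partial>Mo) - (\<integral>y. x \<partial>Mo)"
      using iA by (intro Bochner_Integration.integral_diff) auto
    also have "\<dots> = vm * (measure Mo A + s * measure Mo B) - x"
      using iA sp Q.prob_space by (simp add: Bochner_Integration.integral_add)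
    finally show "(\<integral>y. (vm * (indicator A y + s * indicator B y) - x) \<partial>Mo) = vm * (measure Mo A + s * measure Mo B) - x" .
  qed
  show ?A
  proof -
    have "uu Bm vm Bo vo Mo x \<le> (\<integral>y. (vm * (indicator {..x} y + 0 * indicator {} y) - x) \<partial>Mo)"
      unfolding uu_def
    proof (rule integral_mono[OF int ii])
      fix y show "util Bm vm Bo vo x y \<le> vm * (indicator {..x} y + 0 * indicator {} y) - x"
        using vm wp_bounds[of Bm vm Bo vo x y] unfolding util_def by (auto simp: win_prob_def)
    qed simp_all
    then show ?thesis using ie[of "{..x}" "{}" 0] by simp
  qed
  show ?B
  proof -
    have "(\<integral>y. (vm * (indicator {..<x} y + 0 * indicator {} y) - x) \<partial>Mo) \<le> uu Bm vm Bo vo Mo x"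
      unfolding uu_def
    proof (rule integral_mono[OF ii int])
      fix y show "util Bm vm Bo vo x y \<ge> vm * (indicator {..<x} y + 0 * indicator {} y) - x"
        using vm wp_bounds[of Bm vm Bo vo x y] unfolding util_def by (auto simp: win_prob_def)
    qed simp_all
    then show ?thesis using ie[of "{..<x}" "{}" 0] by simp
  qed
  show ?C
  proof -
    let ?s = "win_prob Bm vm Bo vo x x"
    have "uu Bm vm Bo vo Mo x \<le> (\<integral>y. (vm * (indicator {..<x} y + ?s * indicator {x} y) - x) \<partial>Mo)"
      unfolding uu_def
    proof (rule integral_mono[OF int ii])
      fix y show "util Bm vm Bo vo x y \<le> vm * (indicator {..<x} y + ?s * indicator {x} y) - x"
        using vm wp_bounds[of Bm vm Bo vo x y] unfolding util_def
        by (cases "y < x"; cases "y = x") (auto simp: win_prob_def)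
    qed simp_all
    then show ?thesis using ie[of "{..<x}" "{x}" ?s] by simp
  qed
qed

lemma msub:
  assumes M: "M \<in> mixed_strategies B" and "A \<in> sets borel" "C \<in> sets borel"
  shows "measure M (A \<union> C) \<le> measure M A + measure M C"
proof -
  interpret P: prob_space M using mixedD[OF M] by simp
  show ?thesis using assms mixedD(2)[OF M] by (intro measure_subadditive) (auto simp: P.emeasure_eq_measure)
qed

lemma mmono:
  assumes M: "M \<in> mixed_strategies B" and "A \<subseteq> C" "C \<in> sets borel"
  shows "measure M A \<le> measure M C"
proof -
  interpret P: prob_space M using mixedD[OF M] by simp
  show ?thesis using assms mixedD(2)[OF M] by (intro P.finite_measure_mono) auto
qed

lemma supp_sub:
  assumes M: "M \<in> mixed_strategies B"
  shows "supp M \<subseteq> {0..B}"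
proof
  interpret P: prob_space M using mixedD[OF M] by simp
  have sp: "space M = UNIV" "sets M = sets borel" using mixedD[OF M] by auto
  have c: "measure M (UNIV - {0..B}) = 0"
    using P.prob_compl[of "{0..B}"] mixedD(5)[OF M] sp by simp
  fix x assume x: "x \<in> supp M"
  show "x \<in> {0..B}"
  proof (rule ccontr)
    assume nx: "x \<notin> {0..B}"
    define e where "e = (if x < 0 then -x else x - B)"
    have e0: "e > 0" using nx by (auto simp: e_def)
    have "ball x e \<subseteq> UNIV - {0..B}" using nx by (auto simp: e_def dist_real_def)
    then have "measure M (ball x e) = 0"
      using P.finite_measure_mono[of "ball x e" "UNIV - {0..B}"] c sp by (simp add: measure_nonneg antisym)
    then have "emeasure M (ball x e) = 0" using P.emeasure_eq_measure by simp
    with x e0 show False unfolding supp_def by auto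
  qed
qed

lemma supp_exists:
  assumes M: "M \<in> mixed_strategies B" and t: "measure M {..t} > 0"
  shows "\<exists>s\<in>supp M. s \<le> t"
proof -
  interpret P: prob_space M using mixedD[OF M] by simp
  have sp: "space M = UNIV" "sets M = sets borel" using mixedD[OF M] by auto
  have c: "measure M (UNIV - {0..B}) = 0"
    using P.prob_compl[of "{0..B}"] mixedD(5)[OF M] sp by simp
  define T where "T = {x. measure M {..x} > 0}"
  have neg: "measure M {..x} = 0" if "x < 0" for x
  proof -
    have "{..x} \<subseteq> UNIV - {0..B}" using that by auto
    then show ?thesis using P.finite_measure_mono[of "{..x}" "UNIV - {0..B}"] c sp by (simp add: measure_nonneg antisym)
  qed
  have Tb: "bdd_below T" unfolding bdd_below_def T_def
    by (rule exI[of _ 0]) (use neg in \<open>force simp: not_le[symmetric]\<close>)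
  have tT: "t \<in> T" using t by (simp add: T_def)
  define s where "s = Inf T"
  have st: "s \<le> t" unfolding s_def by (rule cInf_lower[OF tT Tb])
  have "s \<in> supp M" unfolding supp_def
  proof (intro CollectI allI impI)
    fix e :: real assume e: "e > 0"
    obtain x where xT: "x \<in> T" and xs: "x < s + e/2"
      using cInf_lessD[of T "s + e/2"] tT e unfolding s_def by force
    have nT: "s - e/2 \<notin> T"
    proof
      assume "s - e/2 \<in> T" then have "s \<le> s - e/2" unfolding s_def using Tb by (intro cInf_lower)
      with e show False by simp
    qed
    then have z: "measure M {..s - e/2} = 0" unfolding T_def using measure_nonneg[of M] by (simp add: not_less antisym)
    have "{..x} \<subseteq> {..s - e/2} \<union> {s - e/2<..x}" by auto
    then have "measure M {..x} \<le> measure M ({..s - e/2} \<union> {s - e/2<..x})"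
      using sp by (intro P.finite_measure_mono) auto
    also have "\<dots> \<le> measure M {..s - e/2} + measure M {s - e/2<..x}"
      using M by (intro msub) auto
    finally have "measure M {s - e/2<..x} > 0" using z xT by (simp add: T_def)
    moreover have "{s - e/2<..x} \<subseteq> ball s e" using xs e by (auto simp: dist_real_def)
    ultimately have "measure M (ball s e) > 0"
      using P.finite_measure_mono[of "{s - e/2<..x}" "ball s e"] sp by simp
    then show "emeasure M (ball s e) > 0" using P.emeasure_eq_measure by simp
  qed
  with st show ?thesis by blast
qed

lemma low_props:
  assumes M: "M \<in> mixed_strategies B"
  shows "supp M \<noteq> {}" "0 \<le> supp_low M" "supp_low M \<le> B" "measure M {..<supp_low M} = 0"
    "\<And>e. e > 0 \<Longrightarrow> measure M {supp_low M..<supp_low M + e} > 0"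
    "supp_low M < supp_up M \<Longrightarrow> supp_low M < B"
proof -
  interpret P: prob_space M using mixedD[OF M] by simp
  have sp: "space M = UNIV" "sets M = sets borel" using mixedD[OF M] by auto
  have "measure M {0..B} \<le> measure M {..B}" by (rule mmono[OF M]) auto
  then have "measure M {..B} > 0" using mixedD(5)[OF M] by simp
  then obtain s0 where s0: "s0 \<in> supp M" using supp_exists[OF M] by blast
  then show ne: "supp M \<noteq> {}" by blast
  have sub: "supp M \<subseteq> {0..B}" by (rule supp_sub[OF M])
  have bb: "bdd_below (supp M)" using sub unfolding bdd_below_def by (intro exI[of _ 0]) auto
  show "0 \<le> supp_low M" unfolding supp_low_def using ne sub by (intro cInf_greatest) auto
  have "supp_low M \<le> s0" unfolding supp_low_def using s0 bb by (intro cInf_lower)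
  then show "supp_low M \<le> B" using s0 sub by auto
  let ?a = "supp_low M"
  have z: "measure M {..t} = 0" if "t < ?a" for t
  proof (rule ccontr)
    assume "measure M {..t} \<noteq> 0"
    then have "measure M {..t} > 0" using measure_nonneg[of M "{..t}"] by linarith
    then obtain s where "s \<in> supp M" "s \<le> t" using supp_exists[OF M] by blast
    then have "?a \<le> t" unfolding supp_low_def using bb by (meson cInf_lower order_trans)
    with that show False by simp
  qed
  have "{..<?a} = (\<Union>n. {..?a - 1 / Suc n})"
  proof (intro equalityI subsetI)
    fix x assume "x \<in> {..<?a}"
    then have "?a - x > 0" by simp
    then obtain n where "1 / real (Suc n) < ?a - x" using nat_approx_posE by blast
    then have "x \<le> ?a - 1 / Suc n" by simp
    then show "x \<in> (\<Union>n. {..?a - 1 / Suc n})" by blast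
  next
    fix x assume "x \<in> (\<Union>n. {..?a - 1 / Suc n})"
    then obtain n where "x \<in> {..?a - 1 / real (Suc n)}" by blast
    moreover have "1 / real (Suc n) > 0" by simp
    ultimately show "x \<in> {..<?a}" unfolding lessThan_iff atMost_iff by linarith
  qed
  moreover have "(\<Union>n. {..?a - 1 / Suc n}) \<in> null_sets M"
  proof (rule null_sets_UN)
    fix n
    have "measure M {..?a - 1 / Suc n} = 0" by (rule z) simp
    then show "{..?a - 1 / Suc n} \<in> null_sets M" using sp by (auto simp: null_sets_def P.emeasure_eq_measure)
  qed
  ultimately have "{..<?a} \<in> null_sets M" by simp
  then show z2: "measure M {..<?a} = 0" by (simp add: null_sets_def P.emeasure_eq_measure)
  show "measure M {?a..<?a + e} > 0" if e: "e > 0" for e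
  proof -
    obtain s where s: "s \<in> supp M" "s < ?a + e/2"
      using cInf_lessD[of "supp M" "?a + e/2"] ne e unfolding supp_low_def by force
    have "emeasure M (ball s (e/2)) > 0" using s e unfolding supp_def by auto
    then have "measure M (ball s (e/2)) > 0" using P.emeasure_eq_measure by simp
    moreover have "ball s (e/2) \<subseteq> {..<?a} \<union> {?a..<?a + e}" proof
      fix x assume "x \<in> ball s (e/2)"
      then have "\<bar>s - x\<bar> < e/2" by (simp add: dist_real_def)
      then have "x < s + e/2" by (cases "s - x \<ge> 0") auto
      then show "x \<in> {..<?a} \<union> {?a..<?a + e}" using s by auto
    qed
    then have "measure M (ball s (e/2)) \<le> measure M ({..<?a} \<union> {?a..<?a + e})" by (intro mmono[OF M]) auto
    moreover have "measure M ({..<?a} \<union> {?a..<?a + e}) \<le> measure M {..<?a} + measure M {?a..<?a + e}"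
      by (intro msub[OF M]) auto
    ultimately show ?thesis using z2 by simp
  qed
  show "?a < supp_up M \<Longrightarrow> ?a < B"
  proof -
    assume "?a < supp_up M"
    moreover have "supp_up M \<le> B" unfolding supp_up_def using ne sub by (intro cSup_least) auto
    ultimately show ?thesis by simp
  qed
qed

locale br =
  fixes Bm vm Bo vo :: real and Mm Mo :: "real measure"
  assumes Bm: "0 \<le> Bm" and vm: "0 < vm" and Mm: "Mm \<in> mixed_strategies Bm"
    and Mo: "Mo \<in> mixed_strategies Bo"
    and best: "\<forall>M\<in>mixed_strategies Bm. exp_util Bm vm Bo vo M Mo \<le> exp_util Bm vm Bo vo Mm Mo"
begin

abbreviation "u \<equiv> uu Bm vm Bo vo Mo"
abbreviation "U \<equiv> exp_util Bm vm Bo vo Mm Mo"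

lemma u_meas: "u \<in> borel_measurable borel"
proof -
  interpret Q: prob_space Mo using mixedD[OF Mo] by simp
  have sp: "sets (borel \<Otimes>\<^sub>M Mo) = sets (borel \<Otimes>\<^sub>M borel)"
    by (rule sets_pair_measure_cong) (auto simp: mixedD[OF Mo])
  have "(\<lambda>z. util Bm vm Bo vo (fst z) (snd z)) \<in> borel_measurable (borel \<Otimes>\<^sub>M Mo)"
    using util_meas measurable_cong_sets[OF sp refl] by blast
  then have "(\<lambda>(x, y). util Bm vm Bo vo x y) \<in> borel_measurable (borel \<Otimes>\<^sub>M Mo)"
    by (simp add: case_prod_beta')
  then have "(\<lambda>x. \<integral>y. util Bm vm Bo vo x y \<partial>Mo) \<in> borel_measurable borel"
    by (rule Q.borel_measurable_lebesgue_integral)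
  then show ?thesis by (simp add: uu_def[abs_def])
qed

lemma U_eq: "U = (\<integral>x. u x \<partial>Mm)" and u_int: "integrable Mm u"
  using eu_fubini[OF Mm Mo] by (simp_all add: uu_def[abs_def])

lemma E1: assumes "x \<in> {0..Bm}" shows "u x \<le> U"
proof -
  have R: "return borel x \<in> mixed_strategies Bm" by (rule return_mixed[OF assms])
  have "exp_util Bm vm Bo vo (return borel x) Mo = (\<integral>x'. u x' \<partial>return borel x)"
    using eu_fubini[OF R Mo] by (simp add: uu_def[abs_def])
  also have "\<dots> = u x" by (rule integral_return) (auto intro: u_meas)
  finally show ?thesis using best R by auto
qed

lemma U0: "0 \<le> U"
proof -
  have "vm * measure Mo {..<0} - 0 \<le> u 0" using uu_bounds(2)[OF Mo less_imp_le[OF vm], where Bm=Bm and vo=vo and x=0] by simp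
  moreover have "0 \<le> vm * measure Mo {..<0}" using vm by simp
  moreover have "u 0 \<le> U" using E1 Bm by simp
  ultimately show ?thesis by linarith
qed

lemma E2:
  assumes A: "A \<in> sets borel" and pos: "measure Mm A > 0"
  shows "\<exists>x\<in>A. x \<in> {0..Bm} \<and> U \<le> u x"
proof (rule ccontr)
  assume "\<not> ?thesis"
  then have lt: "\<And>x. x \<in> A \<inter> {0..Bm} \<Longrightarrow> u x < U" by force
  interpret P: prob_space Mm using mixedD[OF Mm] by simp
  have sp: "space Mm = UNIV" "sets Mm = sets borel" using mixedD[OF Mm] by auto
  have c: "measure Mm (UNIV - {0..Bm}) = 0"
    using P.prob_compl[of "{0..Bm}"] mixedD(5)[OF Mm] sp by simp
  have "A \<subseteq> (A \<inter> {0..Bm}) \<union> (UNIV - {0..Bm})" by auto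
  then have "measure Mm A \<le> measure Mm ((A \<inter> {0..Bm}) \<union> (UNIV - {0..Bm}))"
    using A by (intro mmono[OF Mm]) auto
  also have "\<dots> \<le> measure Mm (A \<inter> {0..Bm}) + measure Mm (UNIV - {0..Bm})"
    using A by (intro msub[OF Mm]) auto
  finally have "measure Mm (A \<inter> {0..Bm}) > 0" using c pos by simp
  then have ne: "emeasure Mm (A \<inter> {0..Bm}) \<noteq> 0" using P.emeasure_eq_measure by simp
  have "(\<integral>x. u x \<partial>Mm) < (\<integral>x. U \<partial>Mm)"
  proof (rule P.integral_less_AE[OF u_int _ ne])
    show "integrable Mm (\<lambda>x. U)" by simp
    show "A \<inter> {0..Bm} \<in> sets Mm" using A sp by auto
    show "AE x in Mm. x \<in> A \<inter> {0..Bm} \<longrightarrow> u x \<noteq> U" using lt by (auto intro!: AE_I2 simp: less_imp_neq)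
    show "AE x in Mm. u x \<le> U" using mixedD(4)[OF Mm] by eventually_elim (rule E1)
  qed
  then show False using U_eq P.prob_space sp by simp
qed

lemma dev:
  assumes c: "0 \<le> c" "c < Bm" and q: "measure Mo {c} > 0" and s: "win_prob Bm vm Bo vo c c < 1"
  shows "u c < U"
proof -
  define s where "s = win_prob Bm vm Bo vo c c"
  define q where "q = measure Mo {c}"
  define d where "d = min (Bm - c) (vm * q * (1 - s) / 2)"
  have qp: "q > 0" using assms by (simp add: q_def)
  have d0: "d > 0" using c vm qp s by (simp add: d_def s_def)
  have d1: "d \<le> Bm - c" "d < vm * q * (1 - s)" using d0 by (auto simp: d_def)
  have "u c \<le> vm * (measure Mo {..<c} + s * q) - c"
    using uu_bounds(3)[OF Mo less_imp_le[OF vm], where Bm=Bm and vo=vo and x=c] by (simp add: s_def q_def)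
  moreover have "vm * measure Mo {..<c + d} - (c + d) \<le> u (c + d)"
    using uu_bounds(2)[OF Mo less_imp_le[OF vm], where Bm=Bm and vo=vo and x="c+d"] by simp
  moreover have "measure Mo {..<c} + q \<le> measure Mo {..<c + d}"
  proof -
    interpret Q: prob_space Mo using mixedD[OF Mo] by simp
    have "measure Mo ({..<c} \<union> {c}) = measure Mo {..<c} + q"
      unfolding q_def using mixedD(2)[OF Mo] by (intro Q.finite_measure_Union) auto
    moreover have "measure Mo ({..<c} \<union> {c}) \<le> measure Mo {..<c + d}"
      using d0 by (intro mmono[OF Mo]) auto
    ultimately show ?thesis by simp
  qed
  moreover have "u (c + d) \<le> U" using c d1 d0 by (intro E1) auto
  moreover have "vm * (measure Mo {..<c} + q) - vm * (measure Mo {..<c} + s * q) = vm * q * (1 - s)"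
    by (simp add: algebra_simps)
  ultimately show ?thesis using vm d1
    by (smt (verit, best) mult_left_mono)
qed

lemma noatom:
  assumes a0: "supp_low Mm > 0" and z: "measure Mo {supp_low Mm} = 0"
    and gt: "U > vm * measure Mo {..<supp_low Mm} - supp_low Mm"
  shows False
proof -
  interpret Q: prob_space Mo using mixedD[OF Mo] by simp
  define a where "a = supp_low Mm"
  define g where "g = U - (vm * measure Mo {..<a} - a)"
  have g0: "g > 0" using gt by (simp add: g_def a_def)
  define A where "A n = {a..a + 1 / Suc n}" for n :: nat
  have fr: "\<And>m n::nat. m \<le> n \<Longrightarrow> 1/real(Suc n) \<le> 1/real(Suc m)"
    by (simp add: frac_le)
  have dec: "decseq A" unfolding A_def decseq_def
  proof (intro allI impI subsetI)
    fix m n :: nat and x assume "m \<le> n" "x \<in> {a..a + 1 / real (Suc n)}"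
    with fr[of m n] show "x \<in> {a..a + 1 / real (Suc m)}" by auto
  qed
  have int: "(\<Inter>n. A n) = {a}"
  proof (intro equalityI subsetI)
    fix x assume x: "x \<in> (\<Inter>n. A n)"
    then have ax: "a \<le> x" by (auto simp: A_def)
    have "x \<le> a"
    proof (rule ccontr)
      assume "\<not> x \<le> a"
      then have "x - a > 0" by simp
      then obtain n where n: "1 / real (Suc n) < x - a" using nat_approx_posE by blast
      have "x \<le> a + 1 / Suc n" using x by (auto simp: A_def)
      with n show False by simp
    qed
    with ax show "x \<in> {a}" by simp
  qed (auto simp: A_def)
  have "(\<lambda>n. measure Mo (A n)) \<longlonglongrightarrow> measure Mo (\<Inter>n. A n)"
  proof (rule Q.finite_Lim_measure_decseq[OF _ dec])
    show "range A \<subseteq> sets Mo"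
    proof (rule image_subsetI)
      fix n show "A n \<in> sets Mo" unfolding A_def using mixedD(2)[OF Mo] by simp
    qed
  qed
  then have "(\<lambda>n. measure Mo (A n)) \<longlonglongrightarrow> 0" using z int by (simp add: a_def)
  then have "(\<lambda>n. vm * measure Mo (A n)) \<longlonglongrightarrow> 0" by (rule tendsto_mult_right_zero)
  then have "eventually (\<lambda>n. vm * measure Mo (A n) < g) sequentially" using g0 by (rule order_tendstoD(2))
  then obtain n where n: "vm * measure Mo (A n) < g" by (auto simp: eventually_sequentially)
  define e where "e = 1 / real (Suc n)"
  have e0: "e > 0" by (simp add: e_def)
  have "measure Mm {a..<a + e} > 0" using low_props(5)[OF Mm e0] by (simp add: a_def)
  then obtain x where x: "x \<in> {a..<a + e}" "U \<le> u x" using E2[of "{a..<a+e}"] by auto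
  have "u x \<le> vm * measure Mo {..x} - x" by (rule uu_bounds(1)[OF Mo less_imp_le[OF vm]])
  moreover have "measure Mo {..x} \<le> measure Mo ({..<a} \<union> A n)"
    using x by (intro mmono[OF Mo]) (auto simp: A_def e_def)
  moreover have "measure Mo ({..<a} \<union> A n) \<le> measure Mo {..<a} + measure Mo (A n)"
    by (intro msub[OF Mo]) (auto simp: A_def)
  ultimately have "u x \<le> vm * (measure Mo {..<a} + measure Mo (A n)) - a"
    using x vm by (smt (verit, best) atLeastLessThan_iff mult_left_mono)
  then show False using x n by (simp add: g_def algebra_simps)
qed

end



lemma nash_sym: "nash_eq B1 v1 B2 v2 M1 M2 \<Longrightarrow> nash_eq B2 v2 B1 v1 M2 M1"
  unfolding nash_eq_def by auto

lemma br_of_nash: "B1 \<ge> 0 \<Longrightarrow> v1 > 0 \<Longrightarrow> nash_eq B1 v1 B2 v2 M1 M2 \<Longrightarrow> br B1 v1 B2 v2 M1 M2"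
  unfolding nash_eq_def br_def by auto

lemma s_sum: "win_prob B1 v1 B2 v2 c c + win_prob B2 v2 B1 v1 c c = 1"
proof -
  have e: "min (min B2 B1) (min v2 v1) = min (min B1 B2) (min v1 v2)" by (simp add: min_def)
  show ?thesis unfolding win_prob_def e by auto
qed

lemma caseA:
  assumes B: "B1 \<ge> 0" "B2 \<ge> 0" and v: "v1 > 0" "v2 > 0" and N: "nash_eq B1 v1 B2 v2 M1 M2"
    and nd2: "supp_low M2 < supp_up M2" and lt: "supp_low M1 < supp_low M2"
  shows False
proof -
  interpret P1: br B1 v1 B2 v2 M1 M2 by (rule br_of_nash[OF B(1) v(1) N])
  interpret P2: br B2 v2 B1 v1 M2 M1 by (rule br_of_nash[OF B(2) v(2) nash_sym[OF N]])
  define a1 where "a1 = supp_low M1"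
  define a2 where "a2 = supp_low M2"
  note M1 = P1.Mm and M2 = P1.Mo
  have z2: "measure M2 {..<a2} = 0" using low_props(4)[OF M2] by (simp add: a2_def)
  have a10: "0 \<le> a1" using low_props(2)[OF M1] by (simp add: a1_def)
  have a2B: "a2 \<le> B2" "a2 < B2" using low_props(3,6)[OF M2] nd2 by (auto simp: a2_def)
  have a1B: "a1 \<le> B1" using low_props(3)[OF M1] by (simp add: a1_def)
  have lt': "a1 < a2" using lt by (simp add: a1_def a2_def)
  have step1: "measure M1 {0<..<a2} = 0"
  proof (rule ccontr)
    assume "measure M1 {0<..<a2} \<noteq> 0"
    then have "measure M1 {0<..<a2} > 0" using measure_nonneg[of M1 "{0<..<a2}"] by linarith
    then obtain x where x: "x \<in> {0<..<a2}" "x \<in> {0..B1}" "P1.U \<le> uu B1 v1 B2 v2 M2 x"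
      using P1.E2[of "{0<..<a2}"] by auto
    have ub: "uu B1 v1 B2 v2 M2 x \<le> v1 * measure M2 {..x} - x" by (rule uu_bounds(1)[OF M2]) (use v in auto)
    have "measure M2 {..x} \<le> measure M2 {..<a2}" using x by (intro mmono[OF M2]) auto
    then have "measure M2 {..x} = 0" using z2 measure_nonneg[of M2 "{..x}"] by linarith
    then have "uu B1 v1 B2 v2 M2 x \<le> - x" using ub by simp
    then have "uu B1 v1 B2 v2 M2 x < 0" using x(1) by simp
    then show False using x P1.U0 by simp
  qed
  have a1z: "a1 = 0"
  proof (rule ccontr)
    assume "a1 \<noteq> 0"
    then have "a1 > 0" using a10 by simp
    have "measure M1 {a1..<a1 + (a2 - a1)} > 0" using low_props(5)[OF M1, of "a2 - a1"] lt' by (simp add: a1_def)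
    moreover have "measure M1 {a1..<a1 + (a2 - a1)} \<le> measure M1 {0<..<a2}"
      using \<open>a1 > 0\<close> by (intro mmono[OF M1]) auto
    ultimately show False using step1 by simp
  qed
  have a20: "a2 > 0" using lt' a1z by simp
  have step3: "P2.U > v2 * measure M1 {..<a2} - a2"
  proof -
    let ?y = "a2 / 2"
    have "v2 * measure M1 {..<?y} - ?y \<le> uu B2 v2 B1 v1 M1 ?y"
      by (rule uu_bounds(2)[OF M1]) (use v in auto)
    moreover have "uu B2 v2 B1 v1 M1 ?y \<le> P2.U" using a20 a2B by (intro P2.E1) auto
    moreover have "measure M1 {..<a2} \<le> measure M1 ({..<?y} \<union> {0<..<a2})"
      using a20 by (intro mmono[OF M1]) auto
    moreover have "measure M1 ({..<?y} \<union> {0<..<a2}) \<le> measure M1 {..<?y} + measure M1 {0<..<a2}"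
      by (intro msub[OF M1]) auto
    ultimately have "v2 * measure M1 {..<a2} - ?y \<le> P2.U" using step1 v
      by (smt (verit, best) mult_left_mono)
    then show ?thesis using a20 by simp
  qed
  have q1: "measure M1 {a2} > 0"
  proof (rule ccontr)
    assume "\<not> ?thesis"
    then have "measure M1 {a2} = 0" using measure_nonneg[of M1 "{a2}"] by linarith
    then show False using P2.noatom a20 step3 by (simp add: a2_def)
  qed
  obtain x1 where "x1 \<in> {a2}" "x1 \<in> {0..B1}" "P1.U \<le> uu B1 v1 B2 v2 M2 x1"
    using P1.E2[of "{a2}"] q1 by auto
  then have a2B1: "a2 \<in> {0..B1}" and u1: "P1.U \<le> uu B1 v1 B2 v2 M2 a2" by auto
  define s1 where "s1 = win_prob B1 v1 B2 v2 a2 a2"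
  have "uu B1 v1 B2 v2 M2 a2 \<le> v1 * (measure M2 {..<a2} + s1 * measure M2 {a2}) - a2"
    unfolding s1_def by (rule uu_bounds(3)[OF M2]) (use v in auto)
  then have "0 < v1 * (s1 * measure M2 {a2})" using u1 P1.U0 z2 a20 by simp
  then have "s1 * measure M2 {a2} > 0" using v by (simp add: zero_less_mult_iff)
  moreover have "s1 \<ge> 0" unfolding s1_def by (rule wp_bounds)
  ultimately have s1p: "s1 > 0" and q2: "measure M2 {a2} > 0"
    using measure_nonneg[of M2 "{a2}"] by (auto simp: zero_less_mult_iff)
  obtain x2 where "x2 \<in> {a2}" "P2.U \<le> uu B2 v2 B1 v1 M1 x2"
    using P2.E2[of "{a2}"] q2 by auto
  then have u2: "P2.U \<le> uu B2 v2 B1 v1 M1 a2" by simp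
  have "win_prob B2 v2 B1 v1 a2 a2 < 1" using s_sum[of B1 v1 B2 v2 a2] s1p by (simp add: s1_def)
  then have "uu B2 v2 B1 v1 M1 a2 < P2.U" using a20 a2B q1 by (intro P2.dev) auto
  with u2 show False by simp
qed

lemma caseB:
  assumes B: "B1 \<ge> 0" "B2 \<ge> 0" and v: "v1 > 0" "v2 > 0" and N: "nash_eq B1 v1 B2 v2 M1 M2"
    and nd1: "supp_low M1 < supp_up M1" and nd2: "supp_low M2 < supp_up M2"
    and eq: "supp_low M1 = supp_low M2" and pos: "supp_low M1 > 0"
  shows False
proof -
  interpret P1: br B1 v1 B2 v2 M1 M2 by (rule br_of_nash[OF B(1) v(1) N])
  interpret P2: br B2 v2 B1 v1 M2 M1 by (rule br_of_nash[OF B(2) v(2) nash_sym[OF N]])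
  define a where "a = supp_low M1"
  note M1 = P1.Mm and M2 = P1.Mo
  have a0: "a > 0" using pos by (simp add: a_def)
  have z1: "measure M1 {..<a} = 0" using low_props(4)[OF M1] by (simp add: a_def)
  have z2: "measure M2 {..<a} = 0" using low_props(4)[OF M2] eq by (simp add: a_def)
  have aB1: "a < B1" using low_props(6)[OF M1] nd1 by (simp add: a_def)
  have aB2: "a < B2" using low_props(6)[OF M2] nd2 eq by (simp add: a_def)
  have q2: "measure M2 {a} > 0"
  proof (rule ccontr)
    assume "\<not> ?thesis"
    then have "measure M2 {a} = 0" using measure_nonneg[of M2 "{a}"] by linarith
    moreover have "P1.U > v1 * measure M2 {..<a} - a" using P1.U0 z2 a0 by simp
    ultimately show False using P1.noatom a0 z2 by (simp add: a_def)
  qed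
  have q1: "measure M1 {a} > 0"
  proof (rule ccontr)
    assume "\<not> ?thesis"
    then have "measure M1 {a} = 0" using measure_nonneg[of M1 "{a}"] by linarith
    moreover have "P2.U > v2 * measure M1 {..<a} - a" using P2.U0 z1 a0 by simp
    ultimately show False using P2.noatom a0 z1 eq by (simp add: a_def)
  qed
  obtain x1 where "x1 \<in> {a}" "P1.U \<le> uu B1 v1 B2 v2 M2 x1"
    using P1.E2[of "{a}"] q1 by auto
  then have u1: "P1.U \<le> uu B1 v1 B2 v2 M2 a" by simp
  obtain x2 where "x2 \<in> {a}" "P2.U \<le> uu B2 v2 B1 v1 M1 x2"
    using P2.E2[of "{a}"] q2 by auto
  then have u2: "P2.U \<le> uu B2 v2 B1 v1 M1 a" by simp
  have ss: "win_prob B1 v1 B2 v2 a a + win_prob B2 v2 B1 v1 a a = 1" by (rule s_sum)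
  show False
  proof (cases "win_prob B1 v1 B2 v2 a a < 1")
    case True
    then have "uu B1 v1 B2 v2 M2 a < P1.U" using a0 aB1 q2 by (intro P1.dev) auto
    with u1 show False by simp
  next
    case False
    then have "win_prob B2 v2 B1 v1 a a < 1" using ss wp_bounds[of B2 v2 B1 v1 a a] by linarith
    then have "uu B2 v2 B1 v1 M1 a < P2.U" using a0 aB2 q1 by (intro P2.dev) auto
    with u2 show False by simp
  qed
qed

theorem lemma4:
  fixes B1 B2 v1 v2 :: real and M1 M2 :: "real measure"
  assumes "B1 \<ge> 0" and "B2 \<ge> 0" and "v1 > 0" and "v2 > 0"
    and "nash_eq B1 v1 B2 v2 M1 M2"
    and "supp_low M1 < supp_up M1" and "supp_low M2 < supp_up M2"
  shows "supp_low M1 = 0 \<and> supp_low M2 = 0"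
proof -
  have M1: "M1 \<in> mixed_strategies B1" and M2: "M2 \<in> mixed_strategies B2"
    using assms(5) unfolding nash_eq_def by auto
  have "\<not> supp_low M1 < supp_low M2" using caseA[OF assms(1-5) assms(7)] by blast
  moreover have "\<not> supp_low M2 < supp_low M1"
    using caseA[OF assms(2,1,4,3) nash_sym[OF assms(5)] assms(6)] by blast
  ultimately have eq: "supp_low M1 = supp_low M2" by simp
  have "\<not> supp_low M1 > 0" using caseB[OF assms eq] by blast
  moreover have "supp_low M1 \<ge> 0" by (rule low_props(2)[OF M1])
  ultimately show ?thesis using eq by simp
qed

end
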